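(* Let $\omega=-\frac12+i\frac{\sqrt3}{2}$ and let the Eisenstein lattice be $\{m+n\omega : m,n\in\mathbb{Z}\}\subset\mathbb{C}$. Up to Euclidean motions (isometries of the plane), there are exactly two equable triangles whose vertices all lie on the Eisenstein lattice. They are realized by the following vertices: (a) $A=8+4\omega$, $B=4+8\omega$, $C=0$; (b) $A=6+3\omega$, $B=8+16\omega$, $C=0$.
   Context: A triangle is a non-degenerate triangle in the plane $\mathbb{C}\cong\mathbb{R}^2$. A triangle is called equable if its perimeter equals its area (as real numbers). *)

theory Defs
  imports "HOL-Analysis.Analysis"
begin

definition eis_omega :: complex where
  "eis_omega = Complex (-1/2) (sqrt 3 / 2)"

definition eisenstein_lattice :: "complex set" where
  "eisenstein_lattice = {of_int m + of_int n * eis_omega | m n :: int. True}"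

definition nondegenerate_triangle :: "complex \<Rightarrow> complex \<Rightarrow> complex \<Rightarrow> bool" where
  "nondegenerate_triangle A B C \<longleftrightarrow> Im ((B - A) * cnj (C - A)) \<noteq> 0"

definition tri_perimeter :: "complex \<Rightarrow> complex \<Rightarrow> complex \<Rightarrow> real" where
  "tri_perimeter A B C = dist A B + dist B C + dist C A"

definition tri_area :: "complex \<Rightarrow> complex \<Rightarrow> complex \<Rightarrow> real" where
  "tri_area A B C = \<bar>Im ((B - A) * cnj (C - A))\<bar> / 2"

definition equable :: "complex \<Rightarrow> complex \<Rightarrow> complex \<Rightarrow> bool" where
  "equable A B C \<longleftrightarrow> nondegenerate_triangle A B C \<and> tri_perimeter A B C = tri_area A B C"

definition congruent_tri :: "complex \<Rightarrow> complex \<Rightarrow> complex \<Rightarrow> complex \<Rightarrow> complex \<Rightarrow> complex \<Rightarrow> bool" where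
  "congruent_tri A B C A' B' C' \<longleftrightarrow>
     (\<exists>f :: complex \<Rightarrow> complex. (\<forall>x y. dist (f x) (f y) = dist x y) \<and> f ` {A, B, C} = {A', B', C'})"

end

theory Submission
  imports Defs "HOL-Computational_Algebra.Primes"
begin

lemma rat_sqrt_square:
  fixes n :: int assumes n: "n \<ge> 0" and r: "sqrt (of_int n) \<in> \<rat>"
  shows "\<exists>m::int. n = m^2"
proof -
  obtain p q :: int where q: "q > 0" and cop: "coprime p q" and e: "sqrt (of_int n) = of_int p / of_int q"
    using r Rats_cases' by blast
  have "(sqrt (of_int n))^2 = of_int n" using n by simp
  then have "of_int n = (of_int p / of_int q :: real)^2" using e by simp
  then have "of_int n * (of_int q)^2 = (of_int p :: real)^2" using q by (simp add: field_simps power2_eq_square)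
  then have e2: "n * q^2 = p^2"
    by (metis of_int_eq_iff of_int_mult of_int_power)
  then have "p^2 = q * (n * q)" by (simp add: power2_eq_square algebra_simps)
  then have "q dvd p^2" by (rule dvdI)
  moreover have "coprime (p^2) q" using cop by simp
  ultimately have "is_unit q"
    using coprime_absorb_right[of q "p^2"] by simp
  then have "q = 1" using q by simp
  then show ?thesis using e2 by auto
qed

lemma three_sq:
  fixes m :: int assumes "3 * N = m^2" shows "\<exists>k. N = 3 * k^2"
proof -
  obtain j r where mj: "m = 3*j + r" and r: "r = m mod 3" by (metis div_mod_decomp_int mult.commute)
  have "r = 0 \<or> r = 1 \<or> r = 2" using r by auto
  have "m^2 = 3 * (3*j^2 + 2*j*r) + r^2" using mj by (simp add: power2_eq_square algebra_simps)
  then have "3 dvd r^2" using assms by (metis dvd_add_right_iff dvd_triv_left)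
  then have "r = 0" using \<open>r = 0 \<or> r = 1 \<or> r = 2\<close> by auto
  then show ?thesis using assms mj by (auto simp: power2_eq_square)
qed


definition eN :: "int \<Rightarrow> int \<Rightarrow> int" where "eN m n = m^2 - m*n + n^2"

lemma eN_4: "4 * eN m n = (2*m-n)^2 + 3*n^2"
  unfolding eN_def by (simp add: power2_eq_square algebra_simps)

lemma eN_nonneg: "eN m n \<ge> 0"
proof -
  have "4 * eN m n \<ge> 0" unfolding eN_4 by simp
  then show ?thesis by simp
qed

lemma eN_zero: assumes "eN m n = 0" shows "m = 0 \<and> n = 0"
proof -
  have "(2*m-n)^2 + 3*n^2 = 0" using assms eN_4[of m n] by simp
  then have "n^2 = 0" "(2*m-n)^2 = 0" by (smt (verit) zero_le_power2)+
  then show ?thesis by simp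
qed

lemma eis_Re: "Re (of_int m + of_int n * eis_omega) = of_int m - of_int n / 2"
  by (simp add: eis_omega_def)

lemma eis_Im: "Im (of_int m + of_int n * eis_omega) = sqrt 3 / 2 * of_int n"
  by (simp add: eis_omega_def)

lemma sqrt3_sq: "sqrt 3 * sqrt 3 = (3::real)"
  by simp

lemma cmod_eis: "cmod (of_int m + of_int n * eis_omega) = sqrt (of_int (eN m n))"
proof -
  have "(Re (of_int m + of_int n * eis_omega))^2 + (Im (of_int m + of_int n * eis_omega))^2
        = (of_int m - of_int n / 2)^2 + (sqrt 3 / 2 * of_int n)^2"
    by (simp only: eis_Re eis_Im)
  also have "\<dots> = of_int (eN m n)"
    unfolding eN_def by (simp add: power2_eq_square algebra_simps)
  finally show ?thesis by (simp add: cmod_def)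
qed

lemma Im_cnj_eis:
  "Im ((of_int a + of_int b * eis_omega) * cnj (of_int c + of_int d * eis_omega))
     = sqrt 3 / 2 * of_int (b*c - a*d)"
proof -
  have "Im ((of_int a + of_int b * eis_omega) * cnj (of_int c + of_int d * eis_omega))
     = Im (of_int a + of_int b * eis_omega) * Re (of_int c + of_int d * eis_omega)
       - Re (of_int a + of_int b * eis_omega) * Im (of_int c + of_int d * eis_omega)"
    by simp
  also have "\<dots> = sqrt 3 / 2 * of_int (b*c - a*d)"
    unfolding eis_Re eis_Im by (simp add: field_simps)
  finally show ?thesis .
qed

lemma diff_eis: "(of_int a + of_int b * eis_omega) - (of_int c + of_int d * eis_omega)
   = of_int (a-c) + of_int (b-d) * eis_omega"
  by (simp add: algebra_simps)

lemma sqrt_3k: assumes "k \<ge> 0" shows "sqrt (of_int (3 * k^2)) = sqrt 3 * of_int k"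
proof -
  have "sqrt (of_int (3 * k^2)) = sqrt 3 * sqrt ((of_int k)^2)"
    by (simp add: real_sqrt_mult)
  then show ?thesis using assms by simp
qed

lemma side_lemma:
  fixes N1 N2 N3 Q :: int
  assumes n1: "N1 \<ge> 0" and n2: "N2 \<ge> 0" and n3: "N3 \<ge> 0" and Q: "Q > 0"
    and e: "sqrt (of_int N1) + sqrt (of_int N2) + sqrt (of_int N3) = sqrt 3 * of_int Q / 4"
  shows "\<exists>k::int. k \<ge> 0 \<and> N3 = 3*k^2"
proof -
  define a where "a = sqrt (of_int N1)"
  define b where "b = sqrt (of_int N2)"
  define c where "c = sqrt (of_int N3)"
  define w where "w = sqrt (3::real)"
  define q where "q = (of_int Q / 4 :: real)"
  define t where "t = w * c"
  define R where "R = 3*q*q + of_int N3 - of_int N1 - of_int N2"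
  have aa: "a*a = of_int N1" using n1 unfolding a_def by simp
  have bb: "b*b = of_int N2" using n2 unfolding b_def by simp
  have cc: "c*c = of_int N3" using n3 unfolding c_def by simp
  have ss: "w*w = 3" unfolding w_def by simp
  have a0: "a \<ge> 0" and b0: "b \<ge> 0" and c0: "c \<ge> 0" and w0: "w > 0"
    unfolding a_def b_def c_def w_def using n1 n2 n3 by simp_all
  have q0: "q > 0" using Q unfolding q_def by simp
  have t0: "t \<ge> 0" unfolding t_def using w0 c0 by simp
  have tt: "t*t = 3 * of_int N3" unfolding t_def using ss cc
    by (metis mult.assoc mult.left_commute)
  have "a + b + c = q*w" unfolding a_def b_def c_def w_def q_def using e by (simp add: field_simps)
  then have e1: "a + b = q*w - c" by linarith
  have "(a+b)*(a+b) = (q*w-c)*(q*w-c)" using e1 by simp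
  then have "a*a + 2*(a*b) + b*b = (q*q)*(w*w) - 2*(q*(w*c)) + c*c" by (simp add: algebra_simps)
  then have h1: "2*(a*b) = R - 2*(q*t)" unfolding R_def t_def using aa bb cc ss by simp
  then have "(2*(a*b))*(2*(a*b)) = (R - 2*(q*t))*(R - 2*(q*t))" by simp
  then have "4*((a*a)*(b*b)) = R*R - 4*(q*R*t) + 4*(q*q)*(t*t)" by (simp add: algebra_simps)
  then have h2: "4*(q*R*t) = R*R + 12*(q*q)* of_int N3 - 4*(of_int N1* of_int N2)"
    using aa bb tt by simp
  have Rq: "R \<in> \<rat>" unfolding R_def q_def
    by (intro Rats_add Rats_diff Rats_mult Rats_divide Rats_of_int) (auto intro: Rats_of_int)
  have qq: "q \<in> \<rat>" unfolding q_def by (intro Rats_divide Rats_of_int) (auto intro: Rats_of_int)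
  have tq: "t \<in> \<rat>"
  proof (cases "R = 0")
    case True
    then have "a*b = -(q*t)" using h1 by simp
    moreover have "a*b \<ge> 0" using a0 b0 by simp
    moreover have "q*t \<ge> 0" using q0 t0 by simp
    ultimately have "q*t = 0" by simp
    then have "t = 0" using q0 by simp
    then show ?thesis by simp
  next
    case False
    then have "t = (R*R + 12*(q*q)* of_int N3 - 4*(of_int N1* of_int N2)) / (4*q*R)"
      using h2 q0 by (simp add: field_simps)
    also have "\<dots> \<in> \<rat>" using Rq qq
      by (intro Rats_add Rats_diff Rats_mult Rats_divide Rats_of_int) (auto intro: Rats_of_int)
    finally show ?thesis .
  qed
  have "t = sqrt (of_int (3*N3))" unfolding t_def w_def c_def by (simp add: real_sqrt_mult)
  then have "sqrt (of_int (3*N3)) \<in> \<rat>" using tq by simp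
  then obtain m where "3*N3 = m^2" using rat_sqrt_square[of "3*N3"] n3 by auto
  then obtain k where "N3 = 3*k^2" using three_sq by blast
  then show ?thesis by (intro exI[of _ "\<bar>k\<bar>"]) simp
qed

lemma enum_sorted:
  fixes x y z :: int
  assumes x0: "0 < x" and xy: "x \<le> y" and yz: "y \<le> z" and eq: "16*(x+y+z) = 3*x*y*z"
    and p1: "even (x+y)" and p2: "even (y+z)"
  shows "(x=4 \<and> y=4 \<and> z=4) \<or> (x=2 \<and> y=4 \<and> z=12)"
proof -
  have z0: "0 < z" using x0 xy yz by linarith
  have "16*(x+y+z) \<le> 48*z" using xy yz x0 by arith
  then have "(3*x*y)*z \<le> 48*z" using eq by simp
  then have "3*x*y \<le> 48" using z0 by simp
  then have xy16: "x*y \<le> 16" by simp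
  have "x*x \<le> x*y" using xy x0 by simp
  then have xx: "x*x \<le> 16" using xy16 by linarith
  have "x \<le> 4"
  proof (rule ccontr)
    assume "\<not> x \<le> 4"
    then have "5 \<le> x" by simp
    then have "5*5 \<le> x*x" by (intro mult_mono) auto
    then show False using xx by simp
  qed
  then have hx: "x = 1 \<or> x = 2 \<or> x = 3 \<or> x = 4" using x0 by linarith
  have "1*y \<le> x*y" using x0 xy by (intro mult_right_mono) auto
  then have "y \<le> 16" using xy16 by simp
  then have hy: "y = 1 \<or> y = 2 \<or> y = 3 \<or> y = 4 \<or> y = 5 \<or> y = 6 \<or> y = 7 \<or> y = 8 \<or> y = 9 \<or> y = 10
     \<or> y = 11 \<or> y = 12 \<or> y = 13 \<or> y = 14 \<or> y = 15 \<or> y = 16" using x0 xy by presburger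
  show ?thesis using hx hy eq p1 p2 xy yz
    by (elim disjE; simp; presburger)
qed


lemma enum_k:
  fixes k1 k2 k3 :: int
  assumes k1: "0<k1" and k2: "0<k2" and k3: "0<k3"
    and eq0: "16*(k1+k2+k3) = 3*(k2+k3-k1)*(k1+k3-k2)*(k1+k2-k3)"
  shows "(k1=4 \<and> k2=4 \<and> k3=4) \<or> (k1=8 \<and> k2=3 \<and> k3=7) \<or> (k1=8 \<and> k2=7 \<and> k3=3)
     \<or> (k1=3 \<and> k2=8 \<and> k3=7) \<or> (k1=3 \<and> k2=7 \<and> k3=8) \<or> (k1=7 \<and> k2=8 \<and> k3=3) \<or> (k1=7 \<and> k2=3 \<and> k3=8)"
proof -
  define x where "x = k2+k3-k1"
  define y where "y = k1+k3-k2"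
  define z where "z = k1+k2-k3"
  have eq: "16*(x+y+z) = 3*x*y*z" using eq0 unfolding x_def y_def z_def by simp
  have sxy: "x + y > 0" "x + z > 0" "y + z > 0" using k1 k2 k3 unfolding x_def y_def z_def by simp_all
  have pos: "x*y*z > 0"
  proof -
    have "16*(x+y+z) > 0" using sxy by simp
    then have "3*x*y*z > 0" using eq by simp
    then show ?thesis by (simp add: zero_less_mult_iff)
  qed
  have ev: "even (x+y)" "even (x+z)" "even (y+z)" "even (y+x)" "even (z+x)" "even (z+y)"
    unfolding x_def y_def z_def by presburger+
  have x0: "x > 0"
  proof (rule ccontr)
    assume "\<not> x > 0"
    then have "x \<le> 0" by simp
    moreover have "y*z \<ge> 0" using sxy \<open>x \<le> 0\<close> by simp
    ultimately have "x*(y*z) \<le> 0" by (simp add: mult_nonpos_nonneg)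
    then show False using pos by (simp add: mult.assoc)
  qed
  have y0: "y > 0"
  proof (rule ccontr)
    assume "\<not> y > 0"
    then have "y \<le> 0" by simp
    moreover have "x*z \<ge> 0" using sxy \<open>y \<le> 0\<close> by simp
    ultimately have "y*(x*z) \<le> 0" by (simp add: mult_nonpos_nonneg)
    then show False using pos by (simp add: mult_ac)
  qed
  have z0: "z > 0"
  proof (rule ccontr)
    assume "\<not> z > 0"
    then have "z \<le> 0" by simp
    moreover have "x*y \<ge> 0" using sxy \<open>z \<le> 0\<close> by simp
    ultimately have "z*(x*y) \<le> 0" by (simp add: mult_nonpos_nonneg)
    then show False using pos by (simp add: mult_ac)
  qed
  have eqp: "16*(x+z+y) = 3*x*z*y" "16*(y+x+z) = 3*y*x*z" "16*(y+z+x) = 3*y*z*x"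
     "16*(z+x+y) = 3*z*x*y" "16*(z+y+x) = 3*z*y*x"
    using eq by (simp_all add: algebra_simps)
  have k: "2*k1 = y+z" "2*k2 = x+z" "2*k3 = x+y"
    unfolding x_def y_def z_def by simp_all
  consider "x\<le>y \<and> y\<le>z" | "x\<le>z \<and> z\<le>y" | "y\<le>x \<and> x\<le>z" | "y\<le>z \<and> z\<le>x" | "z\<le>x \<and> x\<le>y" | "z\<le>y \<and> y\<le>x"
    by linarith
  then show ?thesis
  proof cases
    case 1
    then have "(x=4 \<and> y=4 \<and> z=4) \<or> (x=2 \<and> y=4 \<and> z=12)"
      using enum_sorted[of x y z] x0 eq ev by simp
    then show ?thesis using k by (elim disjE conjE; presburger)
  next
    case 2
    then have "(x=4 \<and> z=4 \<and> y=4) \<or> (x=2 \<and> z=4 \<and> y=12)"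
      using 2 x0 ev eqp by (intro enum_sorted) auto
    then show ?thesis using k by (elim disjE conjE; presburger)
  next
    case 3
    then have "(y=4 \<and> x=4 \<and> z=4) \<or> (y=2 \<and> x=4 \<and> z=12)"
      using 3 y0 ev eqp by (intro enum_sorted) auto
    then show ?thesis using k by (elim disjE conjE; presburger)
  next
    case 4
    then have "(y=4 \<and> z=4 \<and> x=4) \<or> (y=2 \<and> z=4 \<and> x=12)"
      using 4 y0 ev eqp by (intro enum_sorted) auto
    then show ?thesis using k by (elim disjE conjE; presburger)
  next
    case 5
    then have "(z=4 \<and> x=4 \<and> y=4) \<or> (z=2 \<and> x=4 \<and> y=12)"
      using 5 z0 ev eqp by (intro enum_sorted) auto
    then show ?thesis using k by (elim disjE conjE; presburger)
  next
    case 6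
    then have "(z=4 \<and> y=4 \<and> x=4) \<or> (z=2 \<and> y=4 \<and> x=12)"
      using 6 z0 ev eqp by (intro enum_sorted) auto
    then show ?thesis using k by (elim disjE conjE; presburger)
  qed
qed

lemma cong_iso:
  fixes f :: "complex \<Rightarrow> complex"
  assumes "\<And>x y. dist (f x) (f y) = dist x y" "f A = A'" "f B = B'" "f C = C'"
  shows "congruent_tri A B C A' B' C'"
  unfolding congruent_tri_def
  by (rule exI[of _ f]) (use assms in auto)

lemma sss:
  fixes A B C A' B' C' :: complex
  assumes d1: "dist A B = dist A' B'" and d2: "dist B C = dist B' C'" and d3: "dist C A = dist C' A'"
    and AB: "A \<noteq> B"
  shows "congruent_tri A B C A' B' C'"
proof -
  define u where "u = B - A"
  define v where "v = C - A"
  define u' where "u' = B' - A'"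
  define v' where "v' = C' - A'"
  have nu: "cmod u = cmod u'" using d1 unfolding u_def u'_def by (simp add: dist_norm norm_minus_commute)
  have nv: "cmod v = cmod v'" using d3 unfolding v_def v'_def by (simp add: dist_norm)
  have "u - v = B - C" "u' - v' = B' - C'" unfolding u_def v_def u'_def v'_def by simp_all
  then have nuv: "cmod (u - v) = cmod (u' - v')" using d2 by (simp add: dist_norm)
  have u0: "u \<noteq> 0" using AB unfolding u_def by simp
  define p where "p = u * cnj v"
  define p' where "p' = u' * cnj v'"
  have rp: "Re p = ((cmod u)^2 + (cmod v)^2 - (cmod (u - v))^2) / 2"
    unfolding p_def cmod_power2 by (simp add: power2_eq_square algebra_simps)
  have rp': "Re p' = ((cmod u')^2 + (cmod v')^2 - (cmod (u' - v'))^2) / 2"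
    unfolding p'_def cmod_power2 by (simp add: power2_eq_square algebra_simps)
  have re: "Re p = Re p'" using rp rp' nu nv nuv by simp
  have "cmod p = cmod p'" unfolding p_def p'_def using nu nv by (simp add: norm_mult)
  then have "(Re p)^2 + (Im p)^2 = (Re p')^2 + (Im p')^2" by (simp add: cmod_power2[symmetric])
  then have "(Im p)^2 = (Im p')^2" using re by simp
  then have im: "Im p = Im p' \<or> Im p = - Im p'" by (simp add: power2_eq_iff)
  have uu: "u * cnj u = u' * cnj u'"
    using complex_norm_square[of u] complex_norm_square[of u'] nu by simp
  have u'0: "u' \<noteq> 0" using nu u0 by (metis norm_eq_zero)
  have cu0: "cnj u \<noteq> 0" using u0 by simp
  from im show ?thesis
  proof
    assume "Im p = Im p'"
    then have pp: "p = p'" using re by (simp add: complex_eq_iff)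
    then have "cnj p = cnj p'" by simp
    then have cp: "cnj u * v = cnj u' * v'" unfolding p_def p'_def by simp
    have "cnj u * (u' * v) = u' * (cnj u * v)" by simp
    also have "\<dots> = (u' * cnj u') * v'" using cp by simp
    also have "\<dots> = cnj u * (u * v')" using uu by (simp add: mult.commute)
    finally have "u' * v = u * v'" using cu0 by simp
    define w where "w = u' / u"
    have wv: "w * v = v'" unfolding w_def using \<open>u' * v = u * v'\<close> u0
      by (simp add: field_simps)
    have wu: "w * u = u'" unfolding w_def using u0 by simp
    have nw: "cmod w = 1" unfolding w_def using nu u0 u'0 by (simp add: norm_divide)
    show ?thesis
    proof (rule cong_iso[of "\<lambda>z. A' + w * (z - A)"])
      show "dist (A' + w * (x - A)) (A' + w * (y - A)) = dist x y" for x y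
      proof -
        have "A' + w * (x - A) - (A' + w * (y - A)) = w * (x - y)" by (simp add: algebra_simps)
        then show ?thesis by (simp add: dist_norm norm_mult nw)
      qed
      show "A' + w * (A - A) = A'" by simp
      show "A' + w * (B - A) = B'" using wu unfolding u_def u'_def by simp
      show "A' + w * (C - A) = C'" using wv unfolding v_def v'_def by simp
    qed
  next
    assume "Im p = - Im p'"
    then have pp: "p = cnj p'" using re by (simp add: complex_eq_iff)
    then have cp: "u * cnj v = cnj u' * v'" unfolding p_def p'_def by simp
    have "u * (u' * cnj v) = u' * (u * cnj v)" by simp
    also have "\<dots> = (u' * cnj u') * v'" using cp by simp
    also have "\<dots> = u * (cnj u * v')" using uu by (simp add: mult.commute)
    finally have "u' * cnj v = cnj u * v'" using u0 by simp
    define w where "w = u' / cnj u"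
    have wv: "w * cnj v = v'" unfolding w_def using \<open>u' * cnj v = cnj u * v'\<close> cu0
      by (simp add: field_simps)
    have wu: "w * cnj u = u'" unfolding w_def using cu0 by simp
    have nw: "cmod w = 1" unfolding w_def using nu u0 u'0 by (simp add: norm_divide)
    show ?thesis
    proof (rule cong_iso[of "\<lambda>z. A' + w * cnj (z - A)"])
      show "dist (A' + w * cnj (x - A)) (A' + w * cnj (y - A)) = dist x y" for x y
      proof -
        have "A' + w * cnj (x - A) - (A' + w * cnj (y - A)) = w * cnj (x - y)" by (simp add: algebra_simps)
        then show ?thesis by (simp add: dist_norm norm_mult nw) (metis complex_cnj_diff complex_mod_cnj)
      qed
      show "A' + w * cnj (A - A) = A'" by simp
      show "A' + w * cnj (B - A) = B'" using wu unfolding u_def u'_def by simp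
      show "A' + w * cnj (C - A) = C'" using wv unfolding v_def v'_def by simp
    qed
  qed
qed


lemma eN_neg: "eN (-m) (-n) = eN m n"
  unfolding eN_def by (simp add: power2_eq_square)

lemma heron_eis:
  fixes p q r s :: int
  shows "3*(q*r - p* s)^2 = 2*(eN (p-r) (q-s) * eN r s + eN r s * eN p q + eN p q * eN (p-r) (q-s))
     - ((eN (p-r) (q-s))^2 + (eN r s)^2 + (eN p q)^2)"
  unfolding eN_def by (simp add: power2_eq_square algebra_simps)

lemma heron_k:
  fixes k1 k2 k3 :: int
  shows "2*((3*k1^2)*(3*k2^2) + (3*k2^2)*(3*k3^2) + (3*k3^2)*(3*k1^2)) - ((3*k1^2)^2 + (3*k2^2)^2 + (3*k3^2)^2)
     = 9*((k1+k2+k3)*((k2+k3-k1)*(k1+k3-k2)*(k1+k2-k3)))"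
  by (simp add: power2_eq_square algebra_simps)

lemma dist_eis: "dist (of_int a1 + of_int a2 * eis_omega) (of_int b1 + of_int b2 * eis_omega)
   = sqrt (of_int (eN (a1-b1) (a2-b2)))"
  by (simp only: dist_norm diff_eis cmod_eis)

lemma Im_eis3:
  "Im (((of_int b1 + of_int b2 * eis_omega) - (of_int a1 + of_int a2 * eis_omega))
     * cnj ((of_int c1 + of_int c2 * eis_omega) - (of_int a1 + of_int a2 * eis_omega)))
   = sqrt 3 / 2 * of_int ((b2-a2)*(c1-a1) - (b1-a1)*(c2-a2))"
  by (simp only: diff_eis Im_cnj_eis)

lemma lat_obtain:
  assumes "A \<in> eisenstein_lattice"
  obtains m n where "A = of_int m + of_int n * eis_omega"
  using assms unfolding eisenstein_lattice_def by blast

lemma classify: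
  assumes "A \<in> eisenstein_lattice" "B \<in> eisenstein_lattice" "C \<in> eisenstein_lattice"
    and eq: "equable A B C"
  shows "A \<noteq> B \<and> (\<exists>k1 k2 k3::int. dist B C = sqrt 3 * of_int k1 \<and> dist C A = sqrt 3 * of_int k2
      \<and> dist A B = sqrt 3 * of_int k3 \<and>
      ((k1=4 \<and> k2=4 \<and> k3=4) \<or> (k1=8 \<and> k2=3 \<and> k3=7) \<or> (k1=8 \<and> k2=7 \<and> k3=3)
     \<or> (k1=3 \<and> k2=8 \<and> k3=7) \<or> (k1=3 \<and> k2=7 \<and> k3=8) \<or> (k1=7 \<and> k2=8 \<and> k3=3) \<or> (k1=7 \<and> k2=3 \<and> k3=8)))"
proof -
  obtain a1 a2 where a: "A = of_int a1 + of_int a2 * eis_omega" using assms(1) lat_obtain by blast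
  obtain b1 b2 where b: "B = of_int b1 + of_int b2 * eis_omega" using assms(2) lat_obtain by blast
  obtain c1 c2 where c: "C = of_int c1 + of_int c2 * eis_omega" using assms(3) lat_obtain by blast
  define p where "p = b1 - a1"
  define q where "q = b2 - a2"
  define r where "r = c1 - a1"
  define s where "s = c2 - a2"
  define N1 where "N1 = eN (p-r) (q-s)"
  define N2 where "N2 = eN r s"
  define N3 where "N3 = eN p q"
  define D where "D = q*r - p* s"
  have dAB: "dist A B = sqrt (of_int N3)"
  proof -
    have "dist A B = sqrt (of_int (eN (-p) (-q)))" unfolding a b dist_eis p_def q_def by simp
    then show ?thesis unfolding N3_def eN_neg .
  qed
  have dBC: "dist B C = sqrt (of_int N1)"
  proof -
    have "b1 - c1 = p - r" "b2 - c2 = q - s" unfolding p_def q_def r_def s_def by simp_all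
    then show ?thesis unfolding b c dist_eis N1_def by simp
  qed
  have dCA: "dist C A = sqrt (of_int N2)"
    unfolding c a dist_eis N2_def r_def s_def ..
  have im: "Im ((B - A) * cnj (C - A)) = sqrt 3 / 2 * of_int D"
    unfolding a b c Im_eis3 D_def p_def q_def r_def s_def ..
  have D0: "D \<noteq> 0" using eq im unfolding equable_def nondegenerate_triangle_def by auto
  have per: "sqrt (of_int N3) + sqrt (of_int N1) + sqrt (of_int N2) = sqrt 3 * of_int \<bar>D\<bar> / 4"
  proof -
    have "tri_perimeter A B C = tri_area A B C" using eq unfolding equable_def by simp
    then have "sqrt (of_int N3) + sqrt (of_int N1) + sqrt (of_int N2) = \<bar>sqrt 3 / 2 * of_int D\<bar> / 2"
      unfolding tri_perimeter_def tri_area_def dAB dBC dCA im .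
    also have "\<dots> = sqrt 3 * of_int \<bar>D\<bar> / 4" by (simp add: abs_mult)
    finally show ?thesis .
  qed
  have n1: "N1 \<ge> 0" "N2 \<ge> 0" "N3 \<ge> 0" unfolding N1_def N2_def N3_def by (simp_all add: eN_nonneg)
  have Dp: "\<bar>D\<bar> > 0" using D0 by simp
  obtain k3 where k3: "k3 \<ge> 0" "N3 = 3*k3^2"
    using side_lemma[of N1 N2 N3 "\<bar>D\<bar>"] n1 Dp per by (auto simp: add_ac)
  obtain k1 where k1: "k1 \<ge> 0" "N1 = 3*k1^2"
    using side_lemma[of N2 N3 N1 "\<bar>D\<bar>"] n1 Dp per by (auto simp: add_ac)
  obtain k2 where k2: "k2 \<ge> 0" "N2 = 3*k2^2"
    using side_lemma[of N3 N1 N2 "\<bar>D\<bar>"] n1 Dp per by (auto simp: add_ac)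
  have s1: "dist B C = sqrt 3 * of_int k1" using dBC k1 sqrt_3k by simp
  have s2: "dist C A = sqrt 3 * of_int k2" using dCA k2 sqrt_3k by simp
  have s3: "dist A B = sqrt 3 * of_int k3" using dAB k3 sqrt_3k by simp
  have "sqrt 3 * of_int (4*(k1+k2+k3)) = sqrt 3 * (of_int \<bar>D\<bar> :: real)"
    using per s1 s2 s3 dAB dBC dCA by (simp add: algebra_simps)
  then have K: "4*(k1+k2+k3) = \<bar>D\<bar>" by simp
  have k1p: "k1 > 0"
  proof (rule ccontr)
    assume "\<not> k1 > 0"
    then have "N1 = 0" using k1 by simp
    then have "p - r = 0 \<and> q - s = 0" unfolding N1_def by (rule eN_zero)
    then have "D = 0" unfolding D_def by (simp add: algebra_simps)
    then show False using D0 by simp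
  qed
  have k2p: "k2 > 0"
  proof (rule ccontr)
    assume "\<not> k2 > 0"
    then have "N2 = 0" using k2 by simp
    then have "r = 0 \<and> s = 0" unfolding N2_def by (rule eN_zero)
    then have "D = 0" unfolding D_def by simp
    then show False using D0 by simp
  qed
  have k3p: "k3 > 0"
  proof (rule ccontr)
    assume "\<not> k3 > 0"
    then have "N3 = 0" using k3 by simp
    then have "p = 0 \<and> q = 0" unfolding N3_def by (rule eN_zero)
    then have "D = 0" unfolding D_def by simp
    then show False using D0 by simp
  qed
  have AB: "A \<noteq> B" using eq unfolding equable_def nondegenerate_triangle_def by auto
  have H: "3*D^2 = 2*(N1*N2 + N2*N3 + N3*N1) - (N1^2+N2^2+N3^2)"
    unfolding N1_def N2_def N3_def D_def by (rule heron_eis)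
  define K where "K = k1+k2+k3"
  have Kp: "K > 0" using k1p k2p k3p unfolding K_def by simp
  define X where "X = (k2+k3-k1)*(k1+k3-k2)*(k1+k2-k3)"
  have H2: "3*D^2 = 9*(K*X)"
    using trans[OF H[unfolded k1(2) k2(2) k3(2)] heron_k[of k1 k2 k3]] unfolding K_def X_def .
  have "D^2 = (4*K)^2" using K unfolding K_def by (metis power2_abs)
  then have "3*(4*K)^2 = 9*(K*X)" using H2 by simp
  then have "48*(K*K) = 9*(K*X)" by (simp add: power2_eq_square algebra_simps)
  then have "16*(K*K) = 3*(K*X)" by linarith
  then have "K*(16*K - 3*X) = 0" by (simp add: algebra_simps)
  then have "16*K = 3*X" using Kp by simp
  then have "16*(k1+k2+k3) = 3*(k2+k3-k1)*(k1+k3-k2)*(k1+k2-k3)" unfolding K_def X_def by (simp add: mult.assoc)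
  then have "(k1=4 \<and> k2=4 \<and> k3=4) \<or> (k1=8 \<and> k2=3 \<and> k3=7) \<or> (k1=8 \<and> k2=7 \<and> k3=3)
     \<or> (k1=3 \<and> k2=8 \<and> k3=7) \<or> (k1=3 \<and> k2=7 \<and> k3=8) \<or> (k1=7 \<and> k2=8 \<and> k3=3) \<or> (k1=7 \<and> k2=3 \<and> k3=8)"
    using enum_k k1p k2p k3p by blast
  then show ?thesis using AB s1 s2 s3 by blast
qed


lemma in_lat: "of_int m + of_int n * eis_omega \<in> eisenstein_lattice"
  unfolding eisenstein_lattice_def by blast

lemma dist_lat_k:
  assumes "eN (pa-qa) (pb-qb) = 3*k^2" "k \<ge> 0"
  shows "dist (of_int pa + of_int pb * eis_omega) (of_int qa + of_int qb * eis_omega) = sqrt 3 * of_int k"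
  unfolding dist_eis assms(1) using sqrt_3k[OF assms(2)] .

lemma cong_perm:
  assumes "congruent_tri A B C P Q R" "{P, Q, R} = {A', B', C'}"
  shows "congruent_tri A B C A' B' C'"
  using assms unfolding congruent_tri_def by simp

theorem mainTheorem1:
  defines "Aa \<equiv> 8 + 4 * eis_omega" and "Ba \<equiv> 4 + 8 * eis_omega" and "Ca \<equiv> (0::complex)"
      and "Ab \<equiv> 6 + 3 * eis_omega" and "Bb \<equiv> 8 + 16 * eis_omega" and "Cb \<equiv> (0::complex)"
  shows "Aa \<in> eisenstein_lattice \<and> Ba \<in> eisenstein_lattice \<and> Ca \<in> eisenstein_lattice \<and> equable Aa Ba Ca
       \<and> Ab \<in> eisenstein_lattice \<and> Bb \<in> eisenstein_lattice \<and> Cb \<in> eisenstein_lattice \<and> equable Ab Bb Cb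
       \<and> \<not> congruent_tri Aa Ba Ca Ab Bb Cb
       \<and> (\<forall>A B C. A \<in> eisenstein_lattice \<and> B \<in> eisenstein_lattice \<and> C \<in> eisenstein_lattice
                   \<and> equable A B C \<longrightarrow>
                   congruent_tri A B C Aa Ba Ca \<or> congruent_tri A B C Ab Bb Cb)"
proof -
  have Aa: "Aa = of_int 8 + of_int 4 * eis_omega" unfolding Aa_def by simp
  have Ba: "Ba = of_int 4 + of_int 8 * eis_omega" unfolding Ba_def by simp
  have Ca: "Ca = of_int 0 + of_int 0 * eis_omega" unfolding Ca_def by simp
  have Ab: "Ab = of_int 6 + of_int 3 * eis_omega" unfolding Ab_def by simp
  have Bb: "Bb = of_int 8 + of_int 16 * eis_omega" unfolding Bb_def by simp
  have Cb: "Cb = of_int 0 + of_int 0 * eis_omega" unfolding Cb_def by simp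
  have lat: "Aa \<in> eisenstein_lattice" "Ba \<in> eisenstein_lattice" "Ca \<in> eisenstein_lattice"
    "Ab \<in> eisenstein_lattice" "Bb \<in> eisenstein_lattice" "Cb \<in> eisenstein_lattice"
    unfolding Aa Ba Ca Ab Bb Cb by (rule in_lat)+
  have da1: "dist Aa Ba = sqrt 3 * 4"
    using dist_lat_k[where pa=8 and pb=4 and qa=4 and qb=8 and k=4] unfolding Aa Ba by (simp add: eN_def)
  have da2: "dist Ba Ca = sqrt 3 * 4"
    using dist_lat_k[where pa=4 and pb=8 and qa=0 and qb=0 and k=4] unfolding Ba Ca by (simp add: eN_def)
  have da3: "dist Ca Aa = sqrt 3 * 4"
    using dist_lat_k[where pa=0 and pb=0 and qa=8 and qb=4 and k=4] unfolding Ca Aa by (simp add: eN_def)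
  have db1: "dist Ab Bb = sqrt 3 * 7"
    using dist_lat_k[where pa=6 and pb=3 and qa=8 and qb=16 and k=7] unfolding Ab Bb by (simp add: eN_def)
  have db2: "dist Bb Cb = sqrt 3 * 8"
    using dist_lat_k[where pa=8 and pb=16 and qa=0 and qb=0 and k=8] unfolding Bb Cb by (simp add: eN_def)
  have db3: "dist Cb Ab = sqrt 3 * 3"
    using dist_lat_k[where pa=0 and pb=0 and qa=6 and qb=3 and k=3] unfolding Cb Ab by (simp add: eN_def)
  have ima: "Im ((Ba - Aa) * cnj (Ca - Aa)) = sqrt 3 / 2 * of_int (-48)"
    unfolding Aa Ba Ca Im_eis3 by simp
  have imb: "Im ((Bb - Ab) * cnj (Cb - Ab)) = sqrt 3 / 2 * of_int (-72)"
    unfolding Ab Bb Cb Im_eis3 by simp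
  have eqa: "equable Aa Ba Ca"
    unfolding equable_def nondegenerate_triangle_def tri_perimeter_def tri_area_def ima da1 da2 da3
    by (simp add: abs_mult)
  have eqb: "equable Ab Bb Cb"
    unfolding equable_def nondegenerate_triangle_def tri_perimeter_def tri_area_def imb db1 db2 db3
    by (simp add: abs_mult)
  have s3: "sqrt (3::real) > 0" by simp
  have ncong: "\<not> congruent_tri Aa Ba Ca Ab Bb Cb"
  proof
    assume "congruent_tri Aa Ba Ca Ab Bb Cb"
    then obtain f :: "complex \<Rightarrow> complex" where iso: "\<forall>x y. dist (f x) (f y) = dist x y"
      and im: "f ` {Aa, Ba, Ca} = {Ab, Bb, Cb}" unfolding congruent_tri_def by blast
    have "Ab \<in> f ` {Aa, Ba, Ca}" "Bb \<in> f ` {Aa, Ba, Ca}" using im by auto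
    then obtain x y where x: "x \<in> {Aa, Ba, Ca}" "Ab = f x" and y: "y \<in> {Aa, Ba, Ca}" "Bb = f y" by blast
    have "dist x y = sqrt 3 * 7" using iso x y db1 by metis
    moreover have "dist x y = 0 \<or> dist x y = sqrt 3 * 4"
      using x(1) y(1) da1 da2 da3 by (auto simp: dist_commute)
    ultimately show False using s3 by auto
  qed
  have main: "congruent_tri A B C Aa Ba Ca \<or> congruent_tri A B C Ab Bb Cb"
    if h: "A \<in> eisenstein_lattice" "B \<in> eisenstein_lattice" "C \<in> eisenstein_lattice" "equable A B C" for A B C
  proof -
    from classify[OF h] obtain k1 k2 k3 :: int where AB: "A \<noteq> B"
      and s1: "dist B C = sqrt 3 * of_int k1" and s2: "dist C A = sqrt 3 * of_int k2"
      and s3: "dist A B = sqrt 3 * of_int k3"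
      and ks: "(k1=4 \<and> k2=4 \<and> k3=4) \<or> (k1=8 \<and> k2=3 \<and> k3=7) \<or> (k1=8 \<and> k2=7 \<and> k3=3)
     \<or> (k1=3 \<and> k2=8 \<and> k3=7) \<or> (k1=3 \<and> k2=7 \<and> k3=8) \<or> (k1=7 \<and> k2=8 \<and> k3=3) \<or> (k1=7 \<and> k2=3 \<and> k3=8)"
      by blast
    have dbs: "dist Bb Ab = sqrt 3 * 7" "dist Cb Bb = sqrt 3 * 8" "dist Ab Cb = sqrt 3 * 3"
      using db1 db2 db3 by (simp_all add: dist_commute)
    from ks show ?thesis
    proof (elim disjE conjE)
      assume "k1 = 4" "k2 = 4" "k3 = 4"
      then show ?thesis using sss[of A B Aa Ba C Ca] s1 s2 s3 da1 da2 da3 AB by simp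
    next
      assume "k1 = 8" "k2 = 3" "k3 = 7"
      then have "congruent_tri A B C Ab Bb Cb" using sss[of A B Ab Bb C Cb] s1 s2 s3 db1 db2 db3 dbs AB by simp
      then show ?thesis by simp
    next
      assume "k1 = 8" "k2 = 7" "k3 = 3"
      then have "congruent_tri A B C Ab Cb Bb" using sss[of A B Ab Cb C Bb] s1 s2 s3 db1 db2 db3 dbs AB by simp
      then show ?thesis using cong_perm by blast
    next
      assume "k1 = 3" "k2 = 8" "k3 = 7"
      then have "congruent_tri A B C Bb Ab Cb" using sss[of A B Bb Ab C Cb] s1 s2 s3 db1 db2 db3 dbs AB by simp
      then show ?thesis using cong_perm by blast
    next
      assume "k1 = 3" "k2 = 7" "k3 = 8"
      then have "congruent_tri A B C Bb Cb Ab" using sss[of A B Bb Cb C Ab] s1 s2 s3 db1 db2 db3 dbs AB by simp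
      then show ?thesis using cong_perm by blast
    next
      assume "k1 = 7" "k2 = 8" "k3 = 3"
      then have "congruent_tri A B C Cb Ab Bb" using sss[of A B Cb Ab C Bb] s1 s2 s3 db1 db2 db3 dbs AB by simp
      then show ?thesis using cong_perm by blast
    next
      assume "k1 = 7" "k2 = 3" "k3 = 8"
      then have "congruent_tri A B C Cb Bb Ab" using sss[of A B Cb Bb C Ab] s1 s2 s3 db1 db2 db3 dbs AB by simp
      then show ?thesis using cong_perm by blast
    qed
  qed
  show ?thesis using lat eqa eqb ncong main by blast
qed

end
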